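(* Let $\Delta$ be a mesh and let $A:\Delta\to\mathbb{R}$ be 1-increasing. Then: (a) $A$ is grounded if and only if $A^{\mathrm{BL}}$ is grounded; (b) $1$ is a neutral element for $A$ if and only if $1$ is a neutral element for $A^{\mathrm{BL}}$; (c) $A$ is 2-increasing if and only if $A^{\mathrm{BL}}$ is 2-increasing; (d) $A$ is quasi-2-increasing if and only if $A^{\mathrm{BL}}$ is quasi-2-increasing; (e) $A$ is a discrete copula if and only if $A^{\mathrm{BL}}$ is a copula; (f) $A$ is a discrete quasi-copula if and only if $A^{\mathrm{BL}}$ is a quasi-copula.
   Context: A mesh is $\Delta=\delta_x\times\delta_y$ with $\delta_x=\{0=x_0<\dots<x_p=1\}$, $\delta_y=\{0=y_0<\dots<y_q=1\}$. A function is 1-increasing if it is nondecreasing in each variable. $A^{\mathrm{BL}}:[0,1]^2\to\mathbb{R}$ is the function which on each cell $[x_{i-1},x_i]\times[y_{j-1},y_j]$ equals the bilinear interpolation (the unique function taking the given corner values and affine in each variable separately) of the values of $A$ at the cell's corners. Let $\mathbb{D}$ denote either $[0,1]^2$ or a mesh $\Delta$, and let $A:\mathbb{D}\to\mathbb{R}$. For a rectangle $[s_1,s_2]\times[t_1,t_2]$ with corners in $\mathbb{D}$, $V_A=A(s_1,t_1)+A(s_2,t_2)-A(s_2,t_1)-A(s_1,t_2)$. $A$ is grounded if $A(x,0)=0=A(0,y)$ whenever these points are in $\mathbb{D}$; $1$ is a neutral element if $A(x,1)=x$ and $A(1,y)=y$ whenever these points are in $\mathbb{D}$; $A$ is 2-increasing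 if $V_A(R)\ge0$ for every rectangle with corners in $\mathbb{D}$; $A$ is quasi-2-increasing if $V_A(R)\ge0$ for every rectangle with corners in $\mathbb{D}$ at least one of whose sides lies on the boundary of $[0,1]^2$. On $[0,1]^2$, a grounded, 2-increasing function with neutral element 1 is a copula and a grounded, quasi-2-increasing function with neutral element 1 is a quasi-copula; on a mesh $\Delta$ these are called a discrete copula and a discrete quasi-copula, respectively. *)

theory Defs
  imports Complex_Main
begin

text \<open>A function on the mesh is
  represented by a function A :: real => real => real of which only the values on
  X \<times> Y are relevant.\<close>

definition is_mesh :: "real set \<Rightarrow> real set \<Rightarrow> bool" where
  "is_mesh X Y \<longleftrightarrow> finite X \<and> finite Y \<and> 0 \<in> X \<and> 1 \<in> X \<and> 0 \<in> Y \<and> 1 \<in> Y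
      \<and> X \<subseteq> {0..1} \<and> Y \<subseteq> {0..1}"

definition one_increasing_mesh :: "real set \<Rightarrow> real set \<Rightarrow> (real \<Rightarrow> real \<Rightarrow> real) \<Rightarrow> bool" where
  "one_increasing_mesh X Y A \<longleftrightarrow>
     (\<forall>x\<in>X. \<forall>y1\<in>Y. \<forall>y2\<in>Y. y1 \<le> y2 \<longrightarrow> A x y1 \<le> A x y2) \<and>
     (\<forall>y\<in>Y. \<forall>x1\<in>X. \<forall>x2\<in>X. x1 \<le> x2 \<longrightarrow> A x1 y \<le> A x2 y)"

definition lower_pt :: "real set \<Rightarrow> real \<Rightarrow> real" where
  "lower_pt P t = Max {a \<in> P. a \<le> t}"

definition upper_pt :: "real set \<Rightarrow> real \<Rightarrow> real" where
  "upper_pt P t = Min {a \<in> P. t \<le> a}"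

definition rel_pos :: "real set \<Rightarrow> real \<Rightarrow> real" where
  "rel_pos P t = (if upper_pt P t = lower_pt P t then 0
                  else (t - lower_pt P t) / (upper_pt P t - lower_pt P t))"

definition bilinear_ext :: "real set \<Rightarrow> real set \<Rightarrow> (real \<Rightarrow> real \<Rightarrow> real) \<Rightarrow> real \<Rightarrow> real \<Rightarrow> real" where
  "bilinear_ext X Y A x y =
     (let x1 = lower_pt X x; x2 = upper_pt X x; y1 = lower_pt Y y; y2 = upper_pt Y y;
          l = rel_pos X x; m = rel_pos Y y
      in (1 - l) * (1 - m) * A x1 y1 + l * (1 - m) * A x2 y1
         + (1 - l) * m * A x1 y2 + l * m * A x2 y2)"

text \<open>Properties relative to a domain D (either [0,1]^2 or a mesh X \<times> Y).\<close>

definition Vol :: "(real \<Rightarrow> real \<Rightarrow> real) \<Rightarrow> real \<Rightarrow> real \<Rightarrow> real \<Rightarrow> real \<Rightarrow> real" where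
  "Vol A s1 s2 t1 t2 = A s1 t1 + A s2 t2 - A s2 t1 - A s1 t2"

definition grounded_on :: "(real \<times> real) set \<Rightarrow> (real \<Rightarrow> real \<Rightarrow> real) \<Rightarrow> bool" where
  "grounded_on D A \<longleftrightarrow> (\<forall>x. (x, 0) \<in> D \<longrightarrow> A x 0 = 0) \<and> (\<forall>y. (0, y) \<in> D \<longrightarrow> A 0 y = 0)"

definition neutral_one_on :: "(real \<times> real) set \<Rightarrow> (real \<Rightarrow> real \<Rightarrow> real) \<Rightarrow> bool" where
  "neutral_one_on D A \<longleftrightarrow> (\<forall>x. (x, 1) \<in> D \<longrightarrow> A x 1 = x) \<and> (\<forall>y. (1, y) \<in> D \<longrightarrow> A 1 y = y)"

definition corners_in :: "(real \<times> real) set \<Rightarrow> real \<Rightarrow> real \<Rightarrow> real \<Rightarrow> real \<Rightarrow> bool" where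
  "corners_in D s1 s2 t1 t2 \<longleftrightarrow> s1 \<le> s2 \<and> t1 \<le> t2 \<and>
     (s1, t1) \<in> D \<and> (s1, t2) \<in> D \<and> (s2, t1) \<in> D \<and> (s2, t2) \<in> D"

definition two_increasing_on :: "(real \<times> real) set \<Rightarrow> (real \<Rightarrow> real \<Rightarrow> real) \<Rightarrow> bool" where
  "two_increasing_on D A \<longleftrightarrow>
     (\<forall>s1 s2 t1 t2. corners_in D s1 s2 t1 t2 \<longrightarrow> Vol A s1 s2 t1 t2 \<ge> 0)"

definition quasi_two_increasing_on :: "(real \<times> real) set \<Rightarrow> (real \<Rightarrow> real \<Rightarrow> real) \<Rightarrow> bool" where
  "quasi_two_increasing_on D A \<longleftrightarrow>
     (\<forall>s1 s2 t1 t2. corners_in D s1 s2 t1 t2 \<and> (s1 = 0 \<or> s2 = 1 \<or> t1 = 0 \<or> t2 = 1)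
        \<longrightarrow> Vol A s1 s2 t1 t2 \<ge> 0)"

definition unit_sq :: "(real \<times> real) set" where
  "unit_sq = {0..1} \<times> {0..1}"

definition copula :: "(real \<Rightarrow> real \<Rightarrow> real) \<Rightarrow> bool" where
  "copula C \<longleftrightarrow> grounded_on unit_sq C \<and> two_increasing_on unit_sq C \<and> neutral_one_on unit_sq C"

definition quasi_copula :: "(real \<Rightarrow> real \<Rightarrow> real) \<Rightarrow> bool" where
  "quasi_copula C \<longleftrightarrow> grounded_on unit_sq C \<and> quasi_two_increasing_on unit_sq C \<and> neutral_one_on unit_sq C"

definition discrete_copula :: "real set \<Rightarrow> real set \<Rightarrow> (real \<Rightarrow> real \<Rightarrow> real) \<Rightarrow> bool" where
  "discrete_copula X Y A \<longleftrightarrow> grounded_on (X \<times> Y) A \<and> two_increasing_on (X \<times> Y) A \<and> neutral_one_on (X \<times> Y) A"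

definition discrete_quasi_copula :: "real set \<Rightarrow> real set \<Rightarrow> (real \<Rightarrow> real \<Rightarrow> real) \<Rightarrow> bool" where
  "discrete_quasi_copula X Y A \<longleftrightarrow> grounded_on (X \<times> Y) A \<and> quasi_two_increasing_on (X \<times> Y) A \<and> neutral_one_on (X \<times> Y) A"

end

theory Submission
  imports Defs
begin

definition part :: "real set \<Rightarrow> bool" where
  "part P \<longleftrightarrow> finite P \<and> 0 \<in> P \<and> 1 \<in> P \<and> P \<subseteq> {0..1}"

definition ip :: "real set \<Rightarrow> (real \<Rightarrow> real) \<Rightarrow> real \<Rightarrow> real" where
  "ip P f t = (1 - rel_pos P t) * f (lower_pt P t) + rel_pos P t * f (upper_pt P t)"

lemma mesh_part: "is_mesh X Y \<Longrightarrow> part X \<and> part Y"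
  unfolding is_mesh_def part_def by auto

lemma lower_facts:
  assumes "part P" "t \<in> {0..1}"
  shows "lower_pt P t \<in> P" "lower_pt P t \<le> t" "\<And>a. a \<in> P \<Longrightarrow> a \<le> t \<Longrightarrow> a \<le> lower_pt P t"
proof -
  have f: "finite {a \<in> P. a \<le> t}" using assms by (auto simp: part_def)
  have ne: "0 \<in> {a \<in> P. a \<le> t}" using assms by (auto simp: part_def)
  show "lower_pt P t \<in> P" "lower_pt P t \<le> t"
    using Max_in[OF f] ne unfolding lower_pt_def by auto
  show "\<And>a. a \<in> P \<Longrightarrow> a \<le> t \<Longrightarrow> a \<le> lower_pt P t"
    using Max_ge[OF f] unfolding lower_pt_def by auto
qed

lemma upper_facts:
  assumes "part P" "t \<in> {0..1}"
  shows "upper_pt P t \<in> P" "t \<le> upper_pt P t" "\<And>a. a \<in> P \<Longrightarrow> t \<le> a \<Longrightarrow> upper_pt P t \<le> a"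
proof -
  have f: "finite {a \<in> P. t \<le> a}" using assms by (auto simp: part_def)
  have ne: "1 \<in> {a \<in> P. t \<le> a}" using assms by (auto simp: part_def)
  show "upper_pt P t \<in> P" "t \<le> upper_pt P t"
    using Min_in[OF f] ne unfolding upper_pt_def by auto
  show "\<And>a. a \<in> P \<Longrightarrow> t \<le> a \<Longrightarrow> upper_pt P t \<le> a"
    using Min_le[OF f] unfolding upper_pt_def by auto
qed

lemma rel_pos_bounds:
  assumes "part P" "t \<in> {0..1}"
  shows "0 \<le> rel_pos P t" "rel_pos P t \<le> 1"
  using lower_facts[OF assms] upper_facts[OF assms]
  by (auto simp: rel_pos_def divide_simps)

lemma ip_at:
  assumes "part P" "a \<in> P"
  shows "ip P f a = f a"
proof -
  have a: "a \<in> {0..1}" using assms by (auto simp: part_def)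
  have "lower_pt P a = a" using lower_facts[OF assms(1) a] assms(2) by (meson order_antisym order_refl)
  moreover have "upper_pt P a = a" using upper_facts[OF assms(1) a] assms(2) by (meson order_antisym order_refl)
  ultimately show ?thesis by (simp add: ip_def rel_pos_def)
qed

lemma ip_diff: "ip P (\<lambda>a. f a - g a) t = ip P f t - ip P g t"
  by (simp add: ip_def algebra_simps)

lemma ip_const: "ip P (\<lambda>a. c) t = c"
  by (simp add: ip_def algebra_simps)

lemma ip_le:
  assumes "part P" "t \<in> {0..1}" "\<And>a. a \<in> P \<Longrightarrow> f a \<le> g a"
  shows "ip P f t \<le> ip P g t"
proof -
  have l: "0 \<le> rel_pos P t" "rel_pos P t \<le> 1" using rel_pos_bounds[OF assms(1,2)] by auto
  have "f (lower_pt P t) \<le> g (lower_pt P t)" "f (upper_pt P t) \<le> g (upper_pt P t)"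
    using assms(3) lower_facts[OF assms(1,2)] upper_facts[OF assms(1,2)] by auto
  then show ?thesis unfolding ip_def using l
    by (intro add_mono mult_left_mono) auto
qed

lemma ip_mono:
  assumes P: "part P" and s: "s \<in> {0..1}" and t: "t \<in> {0..1}" and st: "s \<le> t"
    and mono: "\<And>a b. a \<in> P \<Longrightarrow> b \<in> P \<Longrightarrow> a \<le> b \<Longrightarrow> f a \<le> f b"
  shows "ip P f s \<le> ip P f t"
proof -
  note ls = lower_facts[OF P s] and us = upper_facts[OF P s]
  note lt = lower_facts[OF P t] and ut = upper_facts[OF P t]
  have cs: "f (lower_pt P s) \<le> f (upper_pt P s)" using ls us by (intro mono) auto
  have ct: "f (lower_pt P t) \<le> f (upper_pt P t)" using lt ut by (intro mono) auto
  have rs: "0 \<le> rel_pos P s" "rel_pos P s \<le> 1" using rel_pos_bounds[OF P s] by auto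
  have rt: "0 \<le> rel_pos P t" "rel_pos P t \<le> 1" using rel_pos_bounds[OF P t] by auto
  have ip_s: "ip P f s = f (lower_pt P s) + rel_pos P s * (f (upper_pt P s) - f (lower_pt P s))"
    by (simp add: ip_def algebra_simps)
  have ip_t: "ip P f t = f (lower_pt P t) + rel_pos P t * (f (upper_pt P t) - f (lower_pt P t))"
    by (simp add: ip_def algebra_simps)
  show ?thesis
  proof (cases "upper_pt P s \<le> lower_pt P t")
    case True
    have "ip P f s \<le> f (upper_pt P s)"
      unfolding ip_s using cs rs mult_left_le_one_le[of "f (upper_pt P s) - f (lower_pt P s)" "rel_pos P s"] by auto
    also have "\<dots> \<le> f (lower_pt P t)" using True us lt by (intro mono) auto
    also have "\<dots> \<le> ip P f t" unfolding ip_t using ct rt by auto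
    finally show ?thesis .
  next
    case False
    have "\<not> s \<le> lower_pt P t" using us(3)[OF lt(1)] False by auto
    then have "lower_pt P t \<le> lower_pt P s" using ls(3)[OF lt(1)] by auto
    moreover have "lower_pt P s \<le> lower_pt P t" using lt(3)[OF ls(1)] ls(2) st by auto
    ultimately have L: "lower_pt P s = lower_pt P t" by auto
    have "\<not> upper_pt P s \<le> t" using lt(3)[OF us(1)] False by auto
    then have "upper_pt P t \<le> upper_pt P s" using ut(3)[OF us(1)] by auto
    moreover have "upper_pt P s \<le> upper_pt P t" using us(3)[OF ut(1)] ut(2) st by auto
    ultimately have U: "upper_pt P s = upper_pt P t" by auto
    show ?thesis
    proof (cases "upper_pt P t = lower_pt P t")
      case True
      then show ?thesis using L U by (simp add: ip_def rel_pos_def)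
    next
      case False
      have d: "upper_pt P t - lower_pt P t > 0" using False lt(2) ut(2) by auto
      have "rel_pos P s \<le> rel_pos P t" using False L U d st
        by (simp add: rel_pos_def divide_right_mono)
      then have "rel_pos P s * (f (upper_pt P t) - f (lower_pt P t)) \<le> rel_pos P t * (f (upper_pt P t) - f (lower_pt P t))"
        using ct by (intro mult_right_mono) auto
      then show ?thesis unfolding ip_s ip_t L U by simp
    qed
  qed
qed

lemma bl_x: "bilinear_ext X Y A x y = ip X (\<lambda>a. ip Y (A a) y) x"
  by (simp add: bilinear_ext_def ip_def Let_def algebra_simps)

lemma bl_y: "bilinear_ext X Y A x y = ip Y (\<lambda>b. ip X (\<lambda>a. A a b) x) y"
  by (simp add: bilinear_ext_def ip_def Let_def algebra_simps)

lemma bl_swap: "bilinear_ext X Y A x y = bilinear_ext Y X (\<lambda>b a. A a b) y x"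
  by (simp add: bilinear_ext_def Let_def algebra_simps)

lemma bl_at: "part X \<Longrightarrow> part Y \<Longrightarrow> a \<in> X \<Longrightarrow> b \<in> Y \<Longrightarrow> bilinear_ext X Y A a b = A a b"
  by (simp add: bl_x ip_at)

lemma vol_gen:
  assumes X: "part X" and Y: "part Y"
    and s: "s1 \<in> {0..1}" "s2 \<in> {0..1}" "s1 \<le> s2"
    and mono: "\<And>a a'. a \<in> X \<Longrightarrow> a' \<in> X \<Longrightarrow> a \<le> a' \<Longrightarrow>
        ip Y (A a) t2 - ip Y (A a) t1 \<le> ip Y (A a') t2 - ip Y (A a') t1"
  shows "Vol (bilinear_ext X Y A) s1 s2 t1 t2 \<ge> 0"
proof -
  have "ip X (\<lambda>a. ip Y (A a) t2 - ip Y (A a) t1) s1 \<le> ip X (\<lambda>a. ip Y (A a) t2 - ip Y (A a) t1) s2"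
    by (rule ip_mono[OF X s]) (rule mono)
  then show ?thesis unfolding Vol_def bl_x ip_diff by simp
qed

lemma bl_two_inc:
  assumes X: "part X" and Y: "part Y" and T: "two_increasing_on (X \<times> Y) A"
  shows "two_increasing_on unit_sq (bilinear_ext X Y A)"
  unfolding two_increasing_on_def
proof (intro allI impI)
  fix s1 s2 t1 t2 assume c: "corners_in unit_sq s1 s2 t1 t2"
  then have s: "s1 \<in> {0..1}" "s2 \<in> {0..1}" "s1 \<le> s2" and t: "t1 \<in> {0..1}" "t2 \<in> {0..1}" "t1 \<le> t2"
    by (auto simp: corners_in_def unit_sq_def)
  show "Vol (bilinear_ext X Y A) s1 s2 t1 t2 \<ge> 0"
  proof (rule vol_gen[OF X Y s])
    fix a a' assume a: "a \<in> X" "a' \<in> X" "a \<le> a'"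
    have "ip Y (\<lambda>b. A a' b - A a b) t1 \<le> ip Y (\<lambda>b. A a' b - A a b) t2"
    proof (rule ip_mono[OF Y t])
      fix b b' assume "b \<in> Y" "b' \<in> Y" "b \<le> b'"
      then have "Vol A a a' b b' \<ge> 0" using T a unfolding two_increasing_on_def corners_in_def by auto
      then show "A a' b - A a b \<le> A a' b' - A a b'" by (simp add: Vol_def)
    qed
    then show "ip Y (A a) t2 - ip Y (A a) t1 \<le> ip Y (A a') t2 - ip Y (A a') t1"
      unfolding ip_diff by simp
  qed
qed

lemma bl_quasi_t1:
  assumes X: "part X" and Y: "part Y" and T: "quasi_two_increasing_on (X \<times> Y) A"
    and s: "s1 \<in> {0..1}" "s2 \<in> {0..1}" "s1 \<le> s2" and t: "t2 \<in> {0..1}"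
  shows "Vol (bilinear_ext X Y A) s1 s2 0 t2 \<ge> 0"
proof (rule vol_gen[OF X Y s])
  fix a a' assume a: "a \<in> X" "a' \<in> X" "a \<le> a'"
  have y0: "0 \<in> Y" using Y by (auto simp: part_def)
  have "ip Y (\<lambda>b. A a' 0 - A a 0) t2 \<le> ip Y (\<lambda>b. A a' b - A a b) t2"
  proof (rule ip_le[OF Y t])
    fix b assume b: "b \<in> Y"
    then have "0 \<le> b" using Y by (auto simp: part_def)
    then have "Vol A a a' 0 b \<ge> 0" using T a b y0 unfolding quasi_two_increasing_on_def corners_in_def by auto
    then show "A a' 0 - A a 0 \<le> A a' b - A a b" by (simp add: Vol_def)
  qed
  then show "ip Y (A a) t2 - ip Y (A a) 0 \<le> ip Y (A a') t2 - ip Y (A a') 0"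
    unfolding ip_diff ip_const ip_at[OF Y y0] by simp
qed

lemma bl_quasi_t2:
  assumes X: "part X" and Y: "part Y" and T: "quasi_two_increasing_on (X \<times> Y) A"
    and s: "s1 \<in> {0..1}" "s2 \<in> {0..1}" "s1 \<le> s2" and t: "t1 \<in> {0..1}"
  shows "Vol (bilinear_ext X Y A) s1 s2 t1 1 \<ge> 0"
proof (rule vol_gen[OF X Y s])
  fix a a' assume a: "a \<in> X" "a' \<in> X" "a \<le> a'"
  have y1: "1 \<in> Y" using Y by (auto simp: part_def)
  have "ip Y (\<lambda>b. A a' b - A a b) t1 \<le> ip Y (\<lambda>b. A a' 1 - A a 1) t1"
  proof (rule ip_le[OF Y t])
    fix b assume b: "b \<in> Y"
    then have "b \<le> 1" using Y by (auto simp: part_def)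
    then have "Vol A a a' b 1 \<ge> 0" using T a b y1 unfolding quasi_two_increasing_on_def corners_in_def by auto
    then show "A a' b - A a b \<le> A a' 1 - A a 1" by (simp add: Vol_def)
  qed
  then show "ip Y (A a) 1 - ip Y (A a) t1 \<le> ip Y (A a') 1 - ip Y (A a') t1"
    unfolding ip_diff ip_const ip_at[OF Y y1] by simp
qed

lemma quasi_swap:
  assumes "quasi_two_increasing_on (X \<times> Y) A"
  shows "quasi_two_increasing_on (Y \<times> X) (\<lambda>b a. A a b)"
  unfolding quasi_two_increasing_on_def
proof (intro allI impI)
  fix s1 s2 t1 t2 assume a: "corners_in (Y \<times> X) s1 s2 t1 t2 \<and> (s1 = 0 \<or> s2 = 1 \<or> t1 = 0 \<or> t2 = 1)"
  then have "corners_in (X \<times> Y) t1 t2 s1 s2 \<and> (t1 = 0 \<or> t2 = 1 \<or> s1 = 0 \<or> s2 = 1)"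
    by (auto simp: corners_in_def)
  then have "Vol A t1 t2 s1 s2 \<ge> 0" using assms unfolding quasi_two_increasing_on_def by blast
  then show "Vol (\<lambda>b a. A a b) s1 s2 t1 t2 \<ge> 0" by (simp add: Vol_def)
qed

lemma bl_quasi:
  assumes X: "part X" and Y: "part Y" and T: "quasi_two_increasing_on (X \<times> Y) A"
  shows "quasi_two_increasing_on unit_sq (bilinear_ext X Y A)"
  unfolding quasi_two_increasing_on_def
proof (intro allI impI, elim conjE)
  fix s1 s2 t1 t2 assume c: "corners_in unit_sq s1 s2 t1 t2" and d: "s1 = 0 \<or> s2 = 1 \<or> t1 = 0 \<or> t2 = 1"
  then have s: "s1 \<in> {0..1}" "s2 \<in> {0..1}" "s1 \<le> s2" and t: "t1 \<in> {0..1}" "t2 \<in> {0..1}" "t1 \<le> t2"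
    by (auto simp: corners_in_def unit_sq_def)
  have T': "quasi_two_increasing_on (Y \<times> X) (\<lambda>b a. A a b)" using quasi_swap[OF T] .
  have sw: "Vol (bilinear_ext X Y A) s1 s2 t1 t2 = Vol (bilinear_ext Y X (\<lambda>b a. A a b)) t1 t2 s1 s2"
    unfolding Vol_def by (simp add: bl_swap[of X Y A])
  from d show "Vol (bilinear_ext X Y A) s1 s2 t1 t2 \<ge> 0"
  proof (elim disjE)
    assume "s1 = 0" then show ?thesis using bl_quasi_t1[OF Y X T' t(1,2,3) s(2)] sw by simp
  next
    assume "s2 = 1" then show ?thesis using bl_quasi_t2[OF Y X T' t(1,2,3) s(1)] sw by simp
  next
    assume "t1 = 0" then show ?thesis using bl_quasi_t1[OF X Y T s t(2)] by simp
  next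
    assume "t2 = 1" then show ?thesis using bl_quasi_t2[OF X Y T s t(1)] by simp
  qed
qed


lemma ip_cong:
  assumes "part P" "t \<in> {0..1}" "\<And>a. a \<in> P \<Longrightarrow> f a = g a"
  shows "ip P f t = ip P g t"
proof -
  have "ip P f t \<le> ip P g t" using assms(3) by (intro ip_le[OF assms(1,2)]) simp
  moreover have "ip P g t \<le> ip P f t" using assms(3) by (intro ip_le[OF assms(1,2)]) simp
  ultimately show ?thesis by simp
qed

lemma ip_id:
  assumes "part P" "t \<in> {0..1}"
  shows "ip P (\<lambda>a. a) t = t"
proof (cases "upper_pt P t = lower_pt P t")
  case True
  then show ?thesis using lower_facts[OF assms] upper_facts[OF assms] by (simp add: ip_def rel_pos_def)
next
  case False
  then have d: "upper_pt P t - lower_pt P t \<noteq> 0" by auto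
  have "ip P (\<lambda>a. a) t = lower_pt P t + rel_pos P t * (upper_pt P t - lower_pt P t)"
    by (simp add: ip_def algebra_simps)
  also have "rel_pos P t * (upper_pt P t - lower_pt P t) = t - lower_pt P t"
    using False d by (simp add: rel_pos_def)
  finally show ?thesis by simp
qed

lemma bl_ground:
  assumes X: "part X" and Y: "part Y" and G: "grounded_on (X \<times> Y) A"
  shows "grounded_on unit_sq (bilinear_ext X Y A)"
proof -
  have y0: "0 \<in> Y" and x0: "0 \<in> X" using X Y by (auto simp: part_def)
  have 1: "bilinear_ext X Y A x 0 = 0" if "x \<in> {0..1}" for x
  proof -
    have "bilinear_ext X Y A x 0 = ip X (\<lambda>a. A a 0) x" by (simp add: bl_y ip_at[OF Y y0])
    also have "\<dots> = ip X (\<lambda>a. 0) x" using G y0 by (intro ip_cong[OF X that]) (auto simp: grounded_on_def)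
    finally show ?thesis by (simp add: ip_const)
  qed
  have 2: "bilinear_ext X Y A 0 y = 0" if "y \<in> {0..1}" for y
  proof -
    have "bilinear_ext X Y A 0 y = ip Y (A 0) y" by (simp add: bl_x ip_at[OF X x0])
    also have "\<dots> = ip Y (\<lambda>a. 0) y" using G x0 by (intro ip_cong[OF Y that]) (auto simp: grounded_on_def)
    finally show ?thesis by (simp add: ip_const)
  qed
  show ?thesis using 1 2 by (auto simp: grounded_on_def unit_sq_def)
qed

lemma bl_neutral:
  assumes X: "part X" and Y: "part Y" and G: "neutral_one_on (X \<times> Y) A"
  shows "neutral_one_on unit_sq (bilinear_ext X Y A)"
proof -
  have y0: "1 \<in> Y" and x0: "1 \<in> X" using X Y by (auto simp: part_def)
  have 1: "bilinear_ext X Y A x 1 = x" if "x \<in> {0..1}" for x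
  proof -
    have "bilinear_ext X Y A x 1 = ip X (\<lambda>a. A a 1) x" by (simp add: bl_y ip_at[OF Y y0])
    also have "\<dots> = ip X (\<lambda>a. a) x" using G y0 by (intro ip_cong[OF X that]) (auto simp: neutral_one_on_def)
    finally show ?thesis by (simp add: ip_id[OF X that])
  qed
  have 2: "bilinear_ext X Y A 1 y = y" if "y \<in> {0..1}" for y
  proof -
    have "bilinear_ext X Y A 1 y = ip Y (A 1) y" by (simp add: bl_x ip_at[OF X x0])
    also have "\<dots> = ip Y (\<lambda>a. a) y" using G x0 by (intro ip_cong[OF Y that]) (auto simp: neutral_one_on_def)
    finally show ?thesis by (simp add: ip_id[OF Y that])
  qed
  show ?thesis using 1 2 by (auto simp: neutral_one_on_def unit_sq_def)
qed

lemma restrict_props: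
  assumes X: "part X" and Y: "part Y"
  shows "grounded_on unit_sq (bilinear_ext X Y A) \<Longrightarrow> grounded_on (X \<times> Y) A"
    and "neutral_one_on unit_sq (bilinear_ext X Y A) \<Longrightarrow> neutral_one_on (X \<times> Y) A"
    and "two_increasing_on unit_sq (bilinear_ext X Y A) \<Longrightarrow> two_increasing_on (X \<times> Y) A"
    and "quasi_two_increasing_on unit_sq (bilinear_ext X Y A) \<Longrightarrow> quasi_two_increasing_on (X \<times> Y) A"
proof -
  have sub: "X \<times> Y \<subseteq> unit_sq" using X Y by (auto simp: part_def unit_sq_def)
  have eq: "\<And>a b. a \<in> X \<Longrightarrow> b \<in> Y \<Longrightarrow> bilinear_ext X Y A a b = A a b" using bl_at[OF X Y] by auto
  have ci: "\<And>s1 s2 t1 t2. corners_in (X \<times> Y) s1 s2 t1 t2 \<Longrightarrow> corners_in unit_sq s1 s2 t1 t2 \<and>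
     Vol (bilinear_ext X Y A) s1 s2 t1 t2 = Vol A s1 s2 t1 t2"
    using sub by (auto simp: corners_in_def Vol_def eq)
  show "grounded_on unit_sq (bilinear_ext X Y A) \<Longrightarrow> grounded_on (X \<times> Y) A"
    unfolding grounded_on_def
  proof (intro conjI allI impI)
    assume G: "(\<forall>x. (x, 0) \<in> unit_sq \<longrightarrow> bilinear_ext X Y A x 0 = 0) \<and> (\<forall>y. (0, y) \<in> unit_sq \<longrightarrow> bilinear_ext X Y A 0 y = 0)"
    fix x assume "(x, 0) \<in> X \<times> Y"
    then show "A x 0 = 0" using G sub eq[of x 0] by auto
  next
    assume G: "(\<forall>x. (x, 0) \<in> unit_sq \<longrightarrow> bilinear_ext X Y A x 0 = 0) \<and> (\<forall>y. (0, y) \<in> unit_sq \<longrightarrow> bilinear_ext X Y A 0 y = 0)"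
    fix y assume "(0, y) \<in> X \<times> Y"
    then show "A 0 y = 0" using G sub eq[of 0 y] by auto
  qed
  show "neutral_one_on unit_sq (bilinear_ext X Y A) \<Longrightarrow> neutral_one_on (X \<times> Y) A"
    unfolding neutral_one_on_def
  proof (intro conjI allI impI)
    assume G: "(\<forall>x. (x, 1) \<in> unit_sq \<longrightarrow> bilinear_ext X Y A x 1 = x) \<and> (\<forall>y. (1, y) \<in> unit_sq \<longrightarrow> bilinear_ext X Y A 1 y = y)"
    fix x assume "(x, 1) \<in> X \<times> Y"
    then show "A x 1 = x" using G sub eq[of x 1] by auto
  next
    assume G: "(\<forall>x. (x, 1) \<in> unit_sq \<longrightarrow> bilinear_ext X Y A x 1 = x) \<and> (\<forall>y. (1, y) \<in> unit_sq \<longrightarrow> bilinear_ext X Y A 1 y = y)"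
    fix y assume "(1, y) \<in> X \<times> Y"
    then show "A 1 y = y" using G sub eq[of 1 y] by auto
  qed
  show "two_increasing_on unit_sq (bilinear_ext X Y A) \<Longrightarrow> two_increasing_on (X \<times> Y) A"
    unfolding two_increasing_on_def
  proof (intro allI impI)
    fix s1 s2 t1 t2
    assume H: "\<forall>s1 s2 t1 t2. corners_in unit_sq s1 s2 t1 t2 \<longrightarrow> Vol (bilinear_ext X Y A) s1 s2 t1 t2 \<ge> 0"
      and c: "corners_in (X \<times> Y) s1 s2 t1 t2"
    show "Vol A s1 s2 t1 t2 \<ge> 0" using H ci[OF c] by metis
  qed
  show "quasi_two_increasing_on unit_sq (bilinear_ext X Y A) \<Longrightarrow> quasi_two_increasing_on (X \<times> Y) A"
    unfolding quasi_two_increasing_on_def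
  proof (intro allI impI)
    fix s1 s2 t1 t2
    assume H: "\<forall>s1 s2 t1 t2. corners_in unit_sq s1 s2 t1 t2 \<and> (s1 = 0 \<or> s2 = 1 \<or> t1 = 0 \<or> t2 = 1) \<longrightarrow> Vol (bilinear_ext X Y A) s1 s2 t1 t2 \<ge> 0"
      and c: "corners_in (X \<times> Y) s1 s2 t1 t2 \<and> (s1 = 0 \<or> s2 = 1 \<or> t1 = 0 \<or> t2 = 1)"
    show "Vol A s1 s2 t1 t2 \<ge> 0" using H[rule_format, of s1 s2 t1 t2] ci[of s1 s2 t1 t2] c by auto
  qed
qed

theorem mainTheorem4:
  fixes X Y :: "real set" and A :: "real \<Rightarrow> real \<Rightarrow> real"
  assumes "is_mesh X Y" and "one_increasing_mesh X Y A"
  shows "(grounded_on (X \<times> Y) A \<longleftrightarrow> grounded_on unit_sq (bilinear_ext X Y A))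
       \<and> (neutral_one_on (X \<times> Y) A \<longleftrightarrow> neutral_one_on unit_sq (bilinear_ext X Y A))
       \<and> (two_increasing_on (X \<times> Y) A \<longleftrightarrow> two_increasing_on unit_sq (bilinear_ext X Y A))
       \<and> (quasi_two_increasing_on (X \<times> Y) A \<longleftrightarrow> quasi_two_increasing_on unit_sq (bilinear_ext X Y A))
       \<and> (discrete_copula X Y A \<longleftrightarrow> copula (bilinear_ext X Y A))
       \<and> (discrete_quasi_copula X Y A \<longleftrightarrow> quasi_copula (bilinear_ext X Y A))"
proof -
  have X: "part X" and Y: "part Y" using mesh_part[OF assms(1)] by auto
  note r = restrict_props[OF X Y, of A]
  have g: "grounded_on (X \<times> Y) A \<longleftrightarrow> grounded_on unit_sq (bilinear_ext X Y A)"
    using r bl_ground[OF X Y] by blast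
  have n: "neutral_one_on (X \<times> Y) A \<longleftrightarrow> neutral_one_on unit_sq (bilinear_ext X Y A)"
    using r bl_neutral[OF X Y] by blast
  have t: "two_increasing_on (X \<times> Y) A \<longleftrightarrow> two_increasing_on unit_sq (bilinear_ext X Y A)"
    using r bl_two_inc[OF X Y] by blast
  have q: "quasi_two_increasing_on (X \<times> Y) A \<longleftrightarrow> quasi_two_increasing_on unit_sq (bilinear_ext X Y A)"
    using r bl_quasi[OF X Y] by blast
  show ?thesis using g n t q
    by (simp add: discrete_copula_def copula_def discrete_quasi_copula_def quasi_copula_def)
qed

end
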